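(* Let $G$ be a finite $p$-group with $Z(G)$ cyclic, let $\alpha\in Z^2(G,\mathbb{C}^\times)$ and let $\rho$ be an irreducible $\alpha$-representation of $G$. Then $\rho$ is faithful if and only if, for any (equivalently, some) non-trivial subgroup $A\le Z(G)$, the restriction $\rho|_A$ is faithful, i.e. no $1\ne a\in A$ has $\rho(a)$ a scalar matrix.
   Context: An $\alpha$-representation is a map $\rho:G\to\mathrm{GL}(V)$ with $\rho(1)=1$ and $\rho(g)\rho(h)=\alpha(g,h)\rho(gh)$; it is faithful if the only $g\in G$ with $\rho(g)$ scalar is $g=1$. *)

theory Defs
  imports "HOL-Algebra.Elementary_Groups" "Jordan_Normal_Form.Matrix"
begin

definition group_center :: "('a, 'b) monoid_scheme \<Rightarrow> 'a set" where
  "group_center G = {z \<in> carrier G. \<forall>g \<in> carrier G. z \<otimes>\<^bsub>G\<^esub> g = g \<otimes>\<^bsub>G\<^esub> z}"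

definition p_group :: "nat \<Rightarrow> ('a, 'b) monoid_scheme \<Rightarrow> bool" where
  "p_group p G \<longleftrightarrow> group G \<and> prime p \<and> finite (carrier G) \<and> (\<exists>k. card (carrier G) = p ^ k)"

definition cocycle2 :: "('a, 'b) monoid_scheme \<Rightarrow> ('a \<Rightarrow> 'a \<Rightarrow> complex) \<Rightarrow> bool" where
  "cocycle2 G \<alpha> \<longleftrightarrow>
     (\<forall>g \<in> carrier G. \<forall>h \<in> carrier G. \<alpha> g h \<noteq> 0) \<and>
     (\<forall>g \<in> carrier G. \<forall>h \<in> carrier G. \<forall>k \<in> carrier G.
        \<alpha> g h * \<alpha> (g \<otimes>\<^bsub>G\<^esub> h) k = \<alpha> h k * \<alpha> g (h \<otimes>\<^bsub>G\<^esub> k))"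

definition alpha_rep ::
  "('a, 'b) monoid_scheme \<Rightarrow> ('a \<Rightarrow> 'a \<Rightarrow> complex) \<Rightarrow> nat \<Rightarrow> ('a \<Rightarrow> complex mat) \<Rightarrow> bool" where
  "alpha_rep G \<alpha> n \<rho> \<longleftrightarrow>
     (\<forall>g \<in> carrier G. \<rho> g \<in> carrier_mat n n) \<and>
     \<rho> \<one>\<^bsub>G\<^esub> = 1\<^sub>m n \<and>
     (\<forall>g \<in> carrier G. \<forall>h \<in> carrier G. \<rho> g * \<rho> h = \<alpha> g h \<cdot>\<^sub>m \<rho> (g \<otimes>\<^bsub>G\<^esub> h))"

definition vec_subspace :: "nat \<Rightarrow> complex vec set \<Rightarrow> bool" where
  "vec_subspace n W \<longleftrightarrow> W \<subseteq> carrier_vec n \<and> 0\<^sub>v n \<in> W \<and>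
     (\<forall>v \<in> W. \<forall>w \<in> W. v + w \<in> W) \<and> (\<forall>c. \<forall>v \<in> W. c \<cdot>\<^sub>v v \<in> W)"

definition irreducible_rep ::
  "('a, 'b) monoid_scheme \<Rightarrow> nat \<Rightarrow> ('a \<Rightarrow> complex mat) \<Rightarrow> bool" where
  "irreducible_rep G n \<rho> \<longleftrightarrow> n > 0 \<and>
     (\<forall>W. vec_subspace n W \<and> (\<forall>g \<in> carrier G. \<forall>w \<in> W. \<rho> g *\<^sub>v w \<in> W)
          \<longrightarrow> W = {0\<^sub>v n} \<or> W = carrier_vec n)"

definition scalar_mat :: "nat \<Rightarrow> complex mat \<Rightarrow> bool" where
  "scalar_mat n M \<longleftrightarrow> (\<exists>c. M = c \<cdot>\<^sub>m 1\<^sub>m n)"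

definition faithful_on ::
  "('a, 'b) monoid_scheme \<Rightarrow> 'a set \<Rightarrow> nat \<Rightarrow> ('a \<Rightarrow> complex mat) \<Rightarrow> bool" where
  "faithful_on G S n \<rho> \<longleftrightarrow> (\<forall>g \<in> S. scalar_mat n (\<rho> g) \<longrightarrow> g = \<one>\<^bsub>G\<^esub>)"

definition faithful_rep :: "('a, 'b) monoid_scheme \<Rightarrow> nat \<Rightarrow> ('a \<Rightarrow> complex mat) \<Rightarrow> bool" where
  "faithful_rep G n \<rho> \<longleftrightarrow> faithful_on G (carrier G) n \<rho>"

end

theory Submission
  imports Defs "HOL-Algebra.Multiplicative_Group" "HOL-Algebra.Group_Action" "HOL-Computational_Algebra.Primes"
begin


lemma card_pgroup_sub:
  fixes G (structure)
  assumes "group G" "finite (carrier G)" "card (carrier G) = p ^ k" "prime p"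
    and "subgroup N G" "N \<noteq> {\<one>\<^bsub>G\<^esub>}"
  shows "p dvd card N"
proof -
  interpret group G by fact
  have "card (rcosets N) * card N = order G" using lagrange assms(5) by blast
  hence d: "card N dvd p ^ k" using assms(3) unfolding order_def by (metis dvd_triv_right)
  then obtain i where i: "i \<le> k" "card N = p ^ i" using divides_primepow_nat assms(4) by blast
  have "finite N" using assms(2,5) subgroup.subset finite_subset by blast
  have "\<one> \<in> N" using assms(5) subgroup.one_closed by blast
  have "card N \<noteq> 1"
  proof
    assume "card N = 1"
    then obtain a where "N = {a}" using card_1_singletonE by blast
    with \<open>\<one> \<in> N\<close> assms(6) show False by auto
  qed
  hence "i \<noteq> 0" using i by auto
  thus ?thesis using i by simp
qed

lemma pgroup_normal_center:
  fixes G (structure)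
  assumes "group G" "finite (carrier G)" "card (carrier G) = p ^ k" "prime p"
    and "subgroup N G" "\<forall>g\<in>carrier G. \<forall>x\<in>N. g \<otimes>\<^bsub>G\<^esub> x \<otimes>\<^bsub>G\<^esub> inv\<^bsub>G\<^esub> g \<in> N"
    and "N \<noteq> {\<one>\<^bsub>G\<^esub>}"
  shows "\<exists>z\<in>N. z \<noteq> \<one>\<^bsub>G\<^esub> \<and> z \<in> group_center G"
proof -
  interpret group G by fact
  define \<phi> where "\<phi> = (\<lambda>g. (\<lambda>h \<in> carrier G. g \<otimes> h \<otimes> (inv g)))"
  interpret A: group_action G "carrier G" \<phi> unfolding \<phi>_def by (rule action_by_conjugation)
  define Z where "Z = group_center G"
  have NG: "N \<subseteq> carrier G" using assms(5) subgroup.subset by blast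
  have finN: "finite N" using assms(2) NG finite_subset by blast
  have pN: "p dvd card N" using card_pgroup_sub assms by blast
  have orb: "orbit G \<phi> x = {g \<otimes> x \<otimes> inv g | g. g \<in> carrier G}" if "x \<in> carrier G" for x
    using that unfolding orbit_def \<phi>_def by auto
  define S where "S = orbit G \<phi> ` (N - Z)"
  have xin: "x \<in> orbit G \<phi> x" if "x \<in> carrier G" for x
    using A.orbit_refl that by blast
  have sub: "orbit G \<phi> x \<subseteq> N - Z" if x: "x \<in> N - Z" for x
  proof
    fix y assume y: "y \<in> orbit G \<phi> x"
    have xc: "x \<in> carrier G" using x NG by auto
    obtain g where g: "g \<in> carrier G" "y = g \<otimes> x \<otimes> inv g" using orb[OF xc] y by auto
    have "y \<in> N" using assms(6) g x by auto
    moreover have "y \<notin> Z"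
    proof
      assume yZ: "y \<in> Z"
      have yc: "y \<in> carrier G" using g xc by auto
      have "inv g \<otimes> y \<otimes> g = inv g \<otimes> (g \<otimes> x \<otimes> inv g) \<otimes> g" using g by simp
      also have "\<dots> = x" using g xc by (simp add: m_assoc flip: m_assoc[of "inv g"])
      finally have e1: "inv g \<otimes> y \<otimes> g = x" .
      have "inv g \<otimes> y \<otimes> g = inv g \<otimes> (y \<otimes> g)" using g yc by (simp add: m_assoc)
      also have "\<dots> = inv g \<otimes> (g \<otimes> y)" using yZ g unfolding Z_def group_center_def by auto
      also have "\<dots> = y" using g yc by (simp flip: m_assoc)
      finally have "x = y" using e1 by simp
      thus False using x yZ by simp
    qed
    ultimately show "y \<in> N - Z" by simp
  qed
  have pO: "p dvd card (orbit G \<phi> x)" if x: "x \<in> N - Z" for x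
  proof -
    have xc: "x \<in> carrier G" using x NG by auto
    have "card (orbit G \<phi> x) * card (stabilizer G \<phi> x) = order G"
      using A.orbit_stabilizer_theorem xc by blast
    hence "card (orbit G \<phi> x) dvd p ^ k" using assms(3) unfolding order_def by (metis dvd_triv_left)
    then obtain i where i: "card (orbit G \<phi> x) = p ^ i" using divides_primepow_nat assms(4) by blast
    obtain g where g: "g \<in> carrier G" "x \<otimes> g \<noteq> g \<otimes> x"
      using x xc unfolding Z_def group_center_def by auto
    have ne: "g \<otimes> x \<otimes> inv g \<noteq> x"
    proof
      assume h: "g \<otimes> x \<otimes> inv g = x"
      have "g \<otimes> x = g \<otimes> x \<otimes> inv g \<otimes> g" using g xc by (simp add: m_assoc)
      also have "\<dots> = x \<otimes> g" using h by simp
      finally show False using g by simp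
    qed
    have "g \<otimes> x \<otimes> inv g \<in> orbit G \<phi> x" using orb xc g by auto
    moreover have "x \<in> orbit G \<phi> x" using xin xc by blast
    moreover have "finite (orbit G \<phi> x)" using sub x finN finite_subset by blast
    ultimately have "card (orbit G \<phi> x) \<noteq> 1" using ne by (metis card_1_singletonE singletonD)
    hence "i \<noteq> 0" using i by auto
    thus ?thesis using i by simp
  qed
  have U: "\<Union> S = N - Z" using sub xin NG unfolding S_def by blast
  have disj: "disjoint S"
    unfolding S_def disjoint_def
  proof (intro ballI impI)
    fix A B assume "A \<in> orbit G \<phi> ` (N - Z)" "B \<in> orbit G \<phi> ` (N - Z)" "A \<noteq> B"
    moreover have "orbit G \<phi> ` (N - Z) \<subseteq> orbits G (carrier G) \<phi>" unfolding orbits_def using NG by auto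
    ultimately show "A \<inter> B = {}" using A.disjoint_union by blast
  qed
  have finS: "finite S" unfolding S_def using finN by simp
  have finO: "finite Q" if "Q \<in> S" for Q
  proof -
    obtain x where x: "x \<in> N - Z" "Q = orbit G \<phi> x" using \<open>Q \<in> S\<close> unfolding S_def by blast
    have "finite (N - Z)" using finN by simp
    thus ?thesis using sub[OF x(1)] x(2) finite_subset by blast
  qed
  have "card (N - Z) = sum card S"
    using card_Union_disjoint[OF disj finO] U by simp
  moreover have "p dvd sum card S" using pO unfolding S_def by (intro dvd_sum) auto
  ultimately have p1: "p dvd card (N - Z)" by simp
  have "card N = card ((N \<inter> Z) \<union> (N - Z))" by (metis Int_Diff_Un)
  also have "\<dots> = card (N \<inter> Z) + card (N - Z)" using finN by (intro card_Un_disjoint) auto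
  finally have "card N = card (N \<inter> Z) + card (N - Z)" .
  hence p2: "p dvd card (N \<inter> Z)" using pN p1 by (metis dvd_add_left_iff)
  have "\<one> \<in> Z" unfolding Z_def group_center_def by simp
  hence one: "\<one> \<in> N \<inter> Z" using assms(5) subgroup.one_closed by blast
  have "finite (N \<inter> Z)" using finN by simp
  hence "card (N \<inter> Z) > 0" using one card_gt_0_iff by blast
  hence "card (N \<inter> Z) \<ge> p" using p2 dvd_imp_le by blast
  hence c2: "card (N \<inter> Z) \<ge> 2" using prime_ge_2_nat[OF assms(4)] by linarith
  have "\<not> N \<inter> Z \<subseteq> {\<one>}"
  proof
    assume h: "N \<inter> Z \<subseteq> {\<one>}"
    have "card (N \<inter> Z) \<le> card {\<one>}" by (rule card_mono) (simp_all add: h)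
    thus False using c2 by simp
  qed
  then obtain z where "z \<in> N" "z \<in> Z" "z \<noteq> \<one>" by blast
  thus ?thesis unfolding Z_def by blast
qed


lemma cyclic_pgroup_common:
  fixes G (structure)
  assumes grp: "group G" and fin: "finite (carrier G)" and cG: "card (carrier G) = p ^ k" and pr: "prime p"
    and Zs: "subgroup Z G" and cyc: "cyclic_group (subgroup_generated G Z)"
  shows "\<exists>u \<in> Z. \<forall>B. subgroup B G \<and> B \<subseteq> Z \<and> B \<noteq> {\<one>} \<longrightarrow> u \<in> B \<and> u \<noteq> \<one>"
proof -
  interpret group G by fact
  interpret H: group "subgroup_generated G Z" by simp
  have cH: "carrier (subgroup_generated G Z) = Z" using Zs subgroup.carrier_subgroup_generated_subgroup by blast
  obtain w where w: "w \<in> Z" "Z = range (\<lambda>n::int. w [^]\<^bsub>subgroup_generated G Z\<^esub> n)"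
    using H.cyclic_group cyc cH by auto
  have wc: "w \<in> carrier G" using w Zs subgroup.subset by blast
  have Zr: "Z = range (\<lambda>n::int. w [^] n)"
    using w int_pow_subgroup_generated[of w Z] cH by auto
  have "ord w dvd p ^ k" using ord_dvd_group_order[OF wc] cG unfolding order_def by simp
  then obtain m where m: "ord w = p ^ m" using divides_primepow_nat pr by blast
  have p2: "p \<ge> 2" using pr prime_ge_2_nat by blast
  define u where "u = w [^] (int (p ^ (m - 1)))"
  have "u \<in> Z" unfolding u_def using Zr by blast
  moreover have "u \<in> B \<and> u \<noteq> \<one>" if B: "subgroup B G" "B \<subseteq> Z" "B \<noteq> {\<one>}" for B
  proof -
    have "\<one> \<in> B" using B subgroup.one_closed by blast
    then obtain b where b: "b \<in> B" "b \<noteq> \<one>" using B(3) by blast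
    then obtain i where i: "b = w [^] (i::int)" using B(2) Zr by blast
    have ndvd: "\<not> int (p ^ m) dvd i" using b i int_pow_eq_id[OF wc, of i] m by simp
    have m1: "m \<ge> 1"
    proof (rule ccontr)
      assume "\<not> m \<ge> 1"
      hence "m = 0" by simp
      thus False using ndvd by simp
    qed
    define d where "d = gcd i (int (p ^ m))"
    have d0: "d \<ge> 0" unfolding d_def by simp
    have "d dvd int (p ^ m)" unfolding d_def by simp
    hence "nat d dvd p ^ m" using d0 by (metis int_dvd_int_iff nat_0_le)
    then obtain a where a: "a \<le> m" "nat d = p ^ a" using divides_primepow_nat pr by blast
    have "a \<noteq> m"
    proof
      assume "a = m"
      hence "d = int (p ^ m)" using a d0 by (metis nat_0_le)
      moreover have "d dvd i" unfolding d_def by simp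
      ultimately show False using ndvd by simp
    qed
    hence "a \<le> m - 1" using a by simp
    hence "p ^ a dvd p ^ (m - 1)" by (rule le_imp_power_dvd)
    hence "d dvd int (p ^ (m - 1))" using a d0 by (metis int_dvd_int_iff nat_0_le)
    then obtain q where q: "int (p ^ (m - 1)) = d * q" by blast
    obtain s t where st: "s * i + t * int (p ^ m) = d" using bezout_int unfolding d_def by blast
    have "i * (s * q) - int (p ^ (m - 1)) = - (t * q) * int (p ^ m)"
      unfolding q st[symmetric] by (simp add: algebra_simps)
    hence "int (ord w) dvd (i * (s * q) - int (p ^ (m - 1)))" using m by simp
    hence "u = w [^] (i * (s * q))" unfolding u_def using int_pow_eq[OF wc] by blast
    also have "\<dots> = b [^] (s * q)" using i int_pow_pow[OF wc] by simp
    finally have "u \<in> B" using subgroup_int_pow_closed[OF B(1) b(1)] by simp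
    moreover have "u \<noteq> \<one>"
    proof
      assume "u = \<one>"
      hence "int (p ^ m) dvd int (p ^ (m - 1))" using int_pow_eq_id[OF wc] m unfolding u_def by simp
      hence "p ^ m dvd p ^ (m - 1)" using int_dvd_int_iff by blast
      hence "m \<le> m - 1" using dvd_power_iff_le p2 by blast
      thus False using m1 by simp
    qed
    ultimately show ?thesis by simp
  qed
  ultimately show ?thesis by blast
qed

lemma center_subgroup:
  fixes G (structure)
  assumes "group G"
  shows "subgroup (group_center G) G"
proof -
  interpret group G by fact
  show ?thesis
  proof (rule subgroupI)
    show "group_center G \<subseteq> carrier G" unfolding group_center_def by auto
    have "\<one> \<in> group_center G" unfolding group_center_def by simp
    thus "group_center G \<noteq> {}" by blast
  next
    fix a assume a: "a \<in> group_center G"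
    have ac: "a \<in> carrier G" using a unfolding group_center_def by simp
    have "inv a \<otimes> g = g \<otimes> inv a" if g: "g \<in> carrier G" for g
    proof -
      have c: "a \<otimes> g = g \<otimes> a" using a g unfolding group_center_def by simp
      have "inv a \<otimes> g = inv a \<otimes> (g \<otimes> a) \<otimes> inv a" using ac g by (simp add: m_assoc)
      also have "\<dots> = inv a \<otimes> (a \<otimes> g) \<otimes> inv a" using c by simp
      also have "\<dots> = g \<otimes> inv a" using ac g by (simp add: m_assoc flip: m_assoc[of "inv a"])
      finally show ?thesis .
    qed
    thus "inv a \<in> group_center G" using ac unfolding group_center_def by simp
  next
    fix a b assume a: "a \<in> group_center G" and b: "b \<in> group_center G"
    have ac: "a \<in> carrier G" and bc: "b \<in> carrier G" using a b unfolding group_center_def by auto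
    have "a \<otimes> b \<otimes> g = g \<otimes> (a \<otimes> b)" if g: "g \<in> carrier G" for g
    proof -
      have "a \<otimes> b \<otimes> g = a \<otimes> (g \<otimes> b)" using b g ac bc unfolding group_center_def by (simp add: m_assoc)
      also have "\<dots> = (a \<otimes> g) \<otimes> b" using ac bc g by (simp add: m_assoc)
      also have "\<dots> = (g \<otimes> a) \<otimes> b" using a g unfolding group_center_def by simp
      also have "\<dots> = g \<otimes> (a \<otimes> b)" using ac bc g by (simp add: m_assoc)
      finally show ?thesis .
    qed
    thus "a \<otimes> b \<in> group_center G" using ac bc unfolding group_center_def by simp
  qed
qed

lemma smult_smult_mat': "(a::complex) \<cdot>\<^sub>m (b \<cdot>\<^sub>m A) = (a * b) \<cdot>\<^sub>m A"
  by (rule eq_matI) auto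

lemma one_smult_mat': "(1::complex) \<cdot>\<^sub>m A = A"
  by (rule eq_matI) auto

lemma scal_left: "A \<in> carrier_mat n n \<Longrightarrow> ((c::complex) \<cdot>\<^sub>m 1\<^sub>m n) * A = c \<cdot>\<^sub>m A"
  using mult_smult_assoc_mat[of "1\<^sub>m n" n n A n c] by simp

lemma scal_right: "A \<in> carrier_mat n n \<Longrightarrow> A * ((c::complex) \<cdot>\<^sub>m 1\<^sub>m n) = c \<cdot>\<^sub>m A"
  using mult_smult_distrib[of A n n "1\<^sub>m n" n c] by simp

lemma scal_inj: "n > 0 \<Longrightarrow> (c::complex) \<cdot>\<^sub>m 1\<^sub>m n = d \<cdot>\<^sub>m 1\<^sub>m n \<Longrightarrow> c = d"
proof -
  assume n: "n > 0" and e: "c \<cdot>\<^sub>m 1\<^sub>m n = d \<cdot>\<^sub>m 1\<^sub>m n"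
  have "(c \<cdot>\<^sub>m 1\<^sub>m n) $$ (0, 0) = (d \<cdot>\<^sub>m 1\<^sub>m n) $$ (0, 0)" using e by simp
  thus "c = d" using n by simp
qed

lemma scal_cancel: "(a::complex) \<noteq> 0 \<Longrightarrow> a \<cdot>\<^sub>m M = c \<cdot>\<^sub>m 1\<^sub>m n \<Longrightarrow> M = (c / a) \<cdot>\<^sub>m 1\<^sub>m n"
proof -
  assume a: "a \<noteq> 0" and e: "a \<cdot>\<^sub>m M = c \<cdot>\<^sub>m 1\<^sub>m n"
  have "M = (1 / a * a) \<cdot>\<^sub>m M" using a by (simp add: one_smult_mat')
  also have "\<dots> = (1 / a) \<cdot>\<^sub>m (a \<cdot>\<^sub>m M)" by (simp add: smult_smult_mat')
  also have "\<dots> = (c / a) \<cdot>\<^sub>m 1\<^sub>m n" using e by (simp add: smult_smult_mat')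
  finally show ?thesis .
qed

lemma kernel_props:
  fixes G (structure)
  assumes grp: "group G" and coc: "cocycle2 G \<alpha>" and rep: "alpha_rep G \<alpha> n \<rho>" and n: "n > 0"
  defines "K \<equiv> {g \<in> carrier G. scalar_mat n (\<rho> g)}"
  shows "subgroup K G" "\<forall>h\<in>carrier G. \<forall>x\<in>K. h \<otimes> x \<otimes> inv h \<in> K"
proof -
  interpret group G by fact
  have anz: "\<alpha> g h \<noteq> 0" if "g \<in> carrier G" "h \<in> carrier G" for g h
    using coc that unfolding cocycle2_def by blast
  have rc: "\<rho> g \<in> carrier_mat n n" if "g \<in> carrier G" for g
    using rep that unfolding alpha_rep_def by blast
  have r1: "\<rho> \<one> = 1\<^sub>m n" using rep unfolding alpha_rep_def by blast
  have rm: "\<rho> g * \<rho> h = \<alpha> g h \<cdot>\<^sub>m \<rho> (g \<otimes> h)" if "g \<in> carrier G" "h \<in> carrier G" for g h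
    using rep that unfolding alpha_rep_def by blast
  show "subgroup K G"
  proof (rule subgroupI)
    show "K \<subseteq> carrier G" unfolding K_def by auto
    have "\<rho> \<one> = 1 \<cdot>\<^sub>m 1\<^sub>m n" using r1 by (simp add: one_smult_mat')
    hence "\<one> \<in> K" unfolding K_def scalar_mat_def by auto
    thus "K \<noteq> {}" by blast
  next
    fix g assume "g \<in> K"
    then obtain c where g: "g \<in> carrier G" "\<rho> g = c \<cdot>\<^sub>m 1\<^sub>m n" unfolding K_def scalar_mat_def by blast
    have ig: "inv g \<in> carrier G" using g by simp
    have "\<rho> g * \<rho> (inv g) = \<alpha> g (inv g) \<cdot>\<^sub>m 1\<^sub>m n" using rm[OF g(1) ig] g r1 by simp
    moreover have "\<rho> g * \<rho> (inv g) = c \<cdot>\<^sub>m \<rho> (inv g)" using g scal_left[OF rc[OF ig]] by simp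
    ultimately have e: "c \<cdot>\<^sub>m \<rho> (inv g) = \<alpha> g (inv g) \<cdot>\<^sub>m 1\<^sub>m n" by simp
    have "c \<noteq> 0"
    proof
      assume "c = 0"
      hence "c \<cdot>\<^sub>m \<rho> (inv g) = 0 \<cdot>\<^sub>m 1\<^sub>m n" using rc[OF ig] by (intro eq_matI) auto
      hence "\<alpha> g (inv g) = 0" using e scal_inj[OF n] by metis
      thus False using anz g(1) ig by blast
    qed
    hence "\<rho> (inv g) = (\<alpha> g (inv g) / c) \<cdot>\<^sub>m 1\<^sub>m n" using scal_cancel e by blast
    thus "inv g \<in> K" using ig unfolding K_def scalar_mat_def by blast
  next
    fix g h assume "g \<in> K" "h \<in> K"
    then obtain c d where g: "g \<in> carrier G" "\<rho> g = c \<cdot>\<^sub>m 1\<^sub>m n"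
      and h: "h \<in> carrier G" "\<rho> h = d \<cdot>\<^sub>m 1\<^sub>m n" unfolding K_def scalar_mat_def by blast
    have "\<alpha> g h \<cdot>\<^sub>m \<rho> (g \<otimes> h) = \<rho> g * \<rho> h" by (rule rm[OF g(1) h(1), symmetric])
    also have "\<dots> = c \<cdot>\<^sub>m (d \<cdot>\<^sub>m 1\<^sub>m n)" using g h scal_left[of "d \<cdot>\<^sub>m 1\<^sub>m n" n c] by simp
    also have "\<dots> = (c * d) \<cdot>\<^sub>m 1\<^sub>m n" by (simp add: smult_smult_mat')
    finally have "\<rho> (g \<otimes> h) = (c * d / \<alpha> g h) \<cdot>\<^sub>m 1\<^sub>m n" using scal_cancel anz g h by blast
    thus "g \<otimes> h \<in> K" using g h unfolding K_def scalar_mat_def by blast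
  qed
  show "\<forall>h\<in>carrier G. \<forall>x\<in>K. h \<otimes> x \<otimes> inv h \<in> K"
  proof (intro ballI)
    fix h x assume h: "h \<in> carrier G" and "x \<in> K"
    then obtain c where x: "x \<in> carrier G" "\<rho> x = c \<cdot>\<^sub>m 1\<^sub>m n" unfolding K_def scalar_mat_def by blast
    have ih: "inv h \<in> carrier G" using h by simp
    have hx: "h \<otimes> x \<in> carrier G" using h x by simp
    have "\<rho> h * \<rho> x * \<rho> (inv h) = (\<alpha> h x \<cdot>\<^sub>m \<rho> (h \<otimes> x)) * \<rho> (inv h)" by (simp only: rm[OF h x(1)])
    also have "\<dots> = \<alpha> h x \<cdot>\<^sub>m (\<rho> (h \<otimes> x) * \<rho> (inv h))"
      using rc[OF hx] rc[OF ih] by (simp add: mult_smult_assoc_mat)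
    also have "\<dots> = \<alpha> h x \<cdot>\<^sub>m (\<alpha> (h \<otimes> x) (inv h) \<cdot>\<^sub>m \<rho> (h \<otimes> x \<otimes> inv h))" using rm[OF hx ih] by simp
    also have "\<dots> = (\<alpha> h x * \<alpha> (h \<otimes> x) (inv h)) \<cdot>\<^sub>m \<rho> (h \<otimes> x \<otimes> inv h)" by (simp add: smult_smult_mat')
    finally have e1: "\<rho> h * \<rho> x * \<rho> (inv h) = (\<alpha> h x * \<alpha> (h \<otimes> x) (inv h)) \<cdot>\<^sub>m \<rho> (h \<otimes> x \<otimes> inv h)" .
    have "\<rho> h * \<rho> x * \<rho> (inv h) = (c \<cdot>\<^sub>m \<rho> h) * \<rho> (inv h)" using x scal_right[OF rc[OF h]] by simp
    also have "\<dots> = c \<cdot>\<^sub>m (\<rho> h * \<rho> (inv h))" using rc[OF h] rc[OF ih] by (simp add: mult_smult_assoc_mat)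
    also have "\<dots> = c \<cdot>\<^sub>m (\<alpha> h (inv h) \<cdot>\<^sub>m 1\<^sub>m n)" using rm[OF h ih] h r1 by simp
    also have "\<dots> = (c * \<alpha> h (inv h)) \<cdot>\<^sub>m 1\<^sub>m n" by (simp add: smult_smult_mat')
    finally have e2: "\<rho> h * \<rho> x * \<rho> (inv h) = (c * \<alpha> h (inv h)) \<cdot>\<^sub>m 1\<^sub>m n" .
    have nz: "\<alpha> h x * \<alpha> (h \<otimes> x) (inv h) \<noteq> 0" using anz h x hx ih by simp
    have "\<rho> (h \<otimes> x \<otimes> inv h) = (c * \<alpha> h (inv h) / (\<alpha> h x * \<alpha> (h \<otimes> x) (inv h))) \<cdot>\<^sub>m 1\<^sub>m n"
      using scal_cancel[OF nz] e1 e2 by metis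
    moreover have "h \<otimes> x \<otimes> inv h \<in> carrier G" using hx ih by simp
    ultimately show "h \<otimes> x \<otimes> inv h \<in> K" unfolding K_def scalar_mat_def by blast
  qed
qed

theorem corollary2p8:
  fixes G :: "('a, 'b) monoid_scheme" and p n :: nat
    and \<alpha> :: "'a \<Rightarrow> 'a \<Rightarrow> complex" and \<rho> :: "'a \<Rightarrow> complex mat"
  assumes "p_group p G"
    and "cyclic_group (subgroup_generated G (group_center G))"
    and "cocycle2 G \<alpha>"
    and "alpha_rep G \<alpha> n \<rho>"
    and "irreducible_rep G n \<rho>"
  shows "(faithful_rep G n \<rho> \<longleftrightarrow>
           (\<forall>A. subgroup A G \<and> A \<subseteq> group_center G \<and> A \<noteq> {\<one>\<^bsub>G\<^esub>} \<longrightarrow> faithful_on G A n \<rho>))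
       \<and> (carrier G \<noteq> {\<one>\<^bsub>G\<^esub>} \<longrightarrow>
           (faithful_rep G n \<rho> \<longleftrightarrow>
             (\<exists>A. subgroup A G \<and> A \<subseteq> group_center G \<and> A \<noteq> {\<one>\<^bsub>G\<^esub>} \<and> faithful_on G A n \<rho>)))"
proof -
  have grp: "group G" and fin: "finite (carrier G)" and pr: "prime p"
    using assms(1) unfolding p_group_def by auto
  obtain k where cG: "card (carrier G) = p ^ k" using assms(1) unfolding p_group_def by auto
  have n: "n > 0" using assms(5) unfolding irreducible_rep_def by simp
  interpret group G by (rule grp)
  define Z where "Z = group_center G"
  define K where "K = {g \<in> carrier G. scalar_mat n (\<rho> g)}"
  have Zs: "subgroup Z G" unfolding Z_def by (rule center_subgroup[OF grp])
  have ZG: "Z \<subseteq> carrier G" using Zs subgroup.subset by blast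
  have Ks: "subgroup K G" and Kn: "\<forall>h\<in>carrier G. \<forall>x\<in>K. h \<otimes>\<^bsub>G\<^esub> x \<otimes>\<^bsub>G\<^esub> inv\<^bsub>G\<^esub> h \<in> K"
    using kernel_props[OF grp assms(3) assms(4) n] unfolding K_def by auto
  have fr: "faithful_rep G n \<rho> \<longleftrightarrow> K \<subseteq> {\<one>\<^bsub>G\<^esub>}"
    unfolding faithful_rep_def faithful_on_def K_def by auto
  have fo: "faithful_on G A n \<rho> \<longleftrightarrow> A \<inter> K \<subseteq> {\<one>\<^bsub>G\<^esub>}" if "A \<subseteq> carrier G" for A
    using that unfolding faithful_on_def K_def by auto
  have KZ: "\<exists>z\<in>K. z \<noteq> \<one>\<^bsub>G\<^esub> \<and> z \<in> Z" if "\<not> K \<subseteq> {\<one>\<^bsub>G\<^esub>}"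
  proof -
    have "K \<noteq> {\<one>\<^bsub>G\<^esub>}" using that by blast
    thus ?thesis using pgroup_normal_center[OF grp fin cG pr Ks Kn] unfolding Z_def by blast
  qed
  have KZs: "subgroup (K \<inter> Z) G" using Ks Zs subgroups_Inter_pair by blast
  have cycZ: "cyclic_group (subgroup_generated G Z)" using assms(2) unfolding Z_def .
  have part1: "faithful_rep G n \<rho> \<longleftrightarrow>
           (\<forall>A. subgroup A G \<and> A \<subseteq> Z \<and> A \<noteq> {\<one>\<^bsub>G\<^esub>} \<longrightarrow> faithful_on G A n \<rho>)"
  proof
    assume f: "faithful_rep G n \<rho>"
    show "\<forall>A. subgroup A G \<and> A \<subseteq> Z \<and> A \<noteq> {\<one>\<^bsub>G\<^esub>} \<longrightarrow> faithful_on G A n \<rho>"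
    proof (intro allI impI)
      fix A assume "subgroup A G \<and> A \<subseteq> Z \<and> A \<noteq> {\<one>\<^bsub>G\<^esub>}"
      hence AG: "A \<subseteq> carrier G" using ZG by blast
      have "K \<subseteq> {\<one>\<^bsub>G\<^esub>}" using f fr by simp
      hence "A \<inter> K \<subseteq> {\<one>\<^bsub>G\<^esub>}" by blast
      thus "faithful_on G A n \<rho>" using fo[OF AG] by simp
    qed
  next
    assume H: "\<forall>A. subgroup A G \<and> A \<subseteq> Z \<and> A \<noteq> {\<one>\<^bsub>G\<^esub>} \<longrightarrow> faithful_on G A n \<rho>"
    show "faithful_rep G n \<rho>"
    proof (rule ccontr)
      assume "\<not> faithful_rep G n \<rho>"
      hence "\<not> K \<subseteq> {\<one>\<^bsub>G\<^esub>}" using fr by simp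
      then obtain z where z: "z \<in> K" "z \<noteq> \<one>\<^bsub>G\<^esub>" "z \<in> Z" using KZ by blast
      have "K \<inter> Z \<noteq> {\<one>\<^bsub>G\<^esub>}" using z by blast
      hence "faithful_on G (K \<inter> Z) n \<rho>" using H KZs ZG by blast
      moreover have KZG: "K \<inter> Z \<subseteq> carrier G" using ZG by blast
      ultimately have "K \<inter> Z \<inter> K \<subseteq> {\<one>\<^bsub>G\<^esub>}" using fo[OF KZG] by simp
      thus False using z by blast
    qed
  qed
  have part2: "faithful_rep G n \<rho> \<longleftrightarrow>
             (\<exists>A. subgroup A G \<and> A \<subseteq> Z \<and> A \<noteq> {\<one>\<^bsub>G\<^esub>} \<and> faithful_on G A n \<rho>)"
    if nt: "carrier G \<noteq> {\<one>\<^bsub>G\<^esub>}"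
  proof
    assume f: "faithful_rep G n \<rho>"
    have cn: "\<forall>h\<in>carrier G. \<forall>x\<in>carrier G. h \<otimes>\<^bsub>G\<^esub> x \<otimes>\<^bsub>G\<^esub> inv\<^bsub>G\<^esub> h \<in> carrier G" by simp
    have "\<exists>z\<in>carrier G. z \<noteq> \<one>\<^bsub>G\<^esub> \<and> z \<in> group_center G"
      by (rule pgroup_normal_center[OF grp fin cG pr subgroup_self cn nt])
    then obtain z where z: "z \<in> carrier G" "z \<noteq> \<one>\<^bsub>G\<^esub>" "z \<in> Z" unfolding Z_def by blast
    have "Z \<noteq> {\<one>\<^bsub>G\<^esub>}" using z by blast
    moreover have "faithful_on G Z n \<rho>"
    proof -
      have "K \<subseteq> {\<one>\<^bsub>G\<^esub>}" using f fr by simp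
      hence "Z \<inter> K \<subseteq> {\<one>\<^bsub>G\<^esub>}" by blast
      thus ?thesis using fo[OF ZG] by simp
    qed
    ultimately show "\<exists>A. subgroup A G \<and> A \<subseteq> Z \<and> A \<noteq> {\<one>\<^bsub>G\<^esub>} \<and> faithful_on G A n \<rho>" using Zs by blast
  next
    assume "\<exists>A. subgroup A G \<and> A \<subseteq> Z \<and> A \<noteq> {\<one>\<^bsub>G\<^esub>} \<and> faithful_on G A n \<rho>"
    then obtain A where A: "subgroup A G" "A \<subseteq> Z" "A \<noteq> {\<one>\<^bsub>G\<^esub>}" "faithful_on G A n \<rho>" by blast
    show "faithful_rep G n \<rho>"
    proof (rule ccontr)
      assume "\<not> faithful_rep G n \<rho>"
      hence "\<not> K \<subseteq> {\<one>\<^bsub>G\<^esub>}" using fr by simp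
      then obtain z where z: "z \<in> K" "z \<noteq> \<one>\<^bsub>G\<^esub>" "z \<in> Z" using KZ by blast
      have "\<exists>u \<in> Z. \<forall>B. subgroup B G \<and> B \<subseteq> Z \<and> B \<noteq> {\<one>\<^bsub>G\<^esub>} \<longrightarrow> u \<in> B \<and> u \<noteq> \<one>\<^bsub>G\<^esub>"
        by (rule cyclic_pgroup_common[OF grp fin cG pr Zs cycZ])
      then obtain u where u: "\<And>B. subgroup B G \<Longrightarrow> B \<subseteq> Z \<Longrightarrow> B \<noteq> {\<one>\<^bsub>G\<^esub>} \<Longrightarrow> u \<in> B \<and> u \<noteq> \<one>\<^bsub>G\<^esub>"
        by blast
      have "K \<inter> Z \<noteq> {\<one>\<^bsub>G\<^esub>}" using z by blast
      hence u1: "u \<in> K \<inter> Z" "u \<noteq> \<one>\<^bsub>G\<^esub>" using u[OF KZs] by auto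
      have u2: "u \<in> A" using u[OF A(1) A(2) A(3)] by blast
      have AG: "A \<subseteq> carrier G" using A(2) ZG by blast
      have "A \<inter> K \<subseteq> {\<one>\<^bsub>G\<^esub>}" using fo[OF AG] A(4) by simp
      thus False using u1 u2 by blast
    qed
  qed
  show ?thesis using part1 part2 unfolding Z_def by blast
qed

end
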